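(* Let $q\ge2$ and let $b,c$ be positive integers. Then either there is no $(b,c)$-coloring of $H(n,q)$ for any positive integer $n$, or there exists $n_0=n_0(b,c;q)$ such that a $(b,c)$-coloring of $H(n,q)$ exists if and only if $n\ge n_0$.
   Context: The Hamming graph $H(n,q)$ has vertex set $\mathbb{Z}_q^n$, two vertices adjacent iff they differ in exactly one coordinate. A $(b,c)$-coloring of $H(n,q)$ is a surjective map onto $\{1,2\}$ in which each color-1 vertex has exactly $b$ neighbours of color 2 and each color-2 vertex has exactly $c$ neighbours of color 1. *)

theory Defs
  imports Main
begin

text \<open>Vertex set of the Hamming graph H(n,q): words of length n over {0..<q},
  represented canonically as functions nat => nat that vanish from index n on.\<close>
definition hamming_vertices :: "nat \<Rightarrow> nat \<Rightarrow> (nat \<Rightarrow> nat) set" where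
  "hamming_vertices n q = {v. (\<forall>i<n. v i < q) \<and> (\<forall>i\<ge>n. v i = 0)}"

definition hamming_adj :: "nat \<Rightarrow> (nat \<Rightarrow> nat) \<Rightarrow> (nat \<Rightarrow> nat) \<Rightarrow> bool" where
  "hamming_adj n u v \<longleftrightarrow> card {i. i < n \<and> u i \<noteq> v i} = 1"

definition bc_coloring :: "nat \<Rightarrow> nat \<Rightarrow> nat \<Rightarrow> nat \<Rightarrow> ((nat \<Rightarrow> nat) \<Rightarrow> nat) \<Rightarrow> bool" where
  "bc_coloring n q b c f \<longleftrightarrow>
     f ` hamming_vertices n q = {1, 2} \<and>
     (\<forall>v\<in>hamming_vertices n q. f v = 1 \<longrightarrow>
        card {u \<in> hamming_vertices n q. hamming_adj n v u \<and> f u = 2} = b) \<and>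
     (\<forall>v\<in>hamming_vertices n q. f v = 2 \<longrightarrow>
        card {u \<in> hamming_vertices n q. hamming_adj n v u \<and> f u = 1} = c)"

definition has_bc_coloring :: "nat \<Rightarrow> nat \<Rightarrow> nat \<Rightarrow> nat \<Rightarrow> bool" where
  "has_bc_coloring n q b c \<longleftrightarrow> (\<exists>f. bc_coloring n q b c f)"

end

theory Submission
  imports Defs
begin

definition tr :: "nat \<Rightarrow> (nat \<Rightarrow> nat) \<Rightarrow> nat \<Rightarrow> nat" where
  "tr n v = (\<lambda>i. if i < n then v i else 0)"

lemma adj_Suc:
  "hamming_adj (Suc n) v u \<longleftrightarrow>
     (v n \<noteq> u n \<and> {i. i < n \<and> v i \<noteq> u i} = {}) \<or>
     (v n = u n \<and> card {i. i < n \<and> v i \<noteq> u i} = 1)"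
proof -
  let ?D = "{i. i < n \<and> v i \<noteq> u i}"
  have fin: "finite ?D" by simp
  have nD: "n \<notin> ?D" by simp
  show ?thesis
  proof (cases "v n = u n")
    case True
    hence "{i. i < Suc n \<and> v i \<noteq> u i} = ?D" by (auto simp: less_Suc_eq)
    thus ?thesis using True by (simp add: hamming_adj_def)
  next
    case False
    hence "{i. i < Suc n \<and> v i \<noteq> u i} = insert n ?D" by (auto simp: less_Suc_eq)
    hence "card {i. i < Suc n \<and> v i \<noteq> u i} = Suc (card ?D)" using fin nD by simp
    thus ?thesis using False fin by (simp add: hamming_adj_def)
  qed
qed

lemma adj_tr: "hamming_adj n (tr n v) w \<longleftrightarrow> card {i. i < n \<and> v i \<noteq> w i} = 1"
proof -
  have "{i. i < n \<and> tr n v i \<noteq> w i} = {i. i < n \<and> v i \<noteq> w i}"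
    unfolding tr_def by auto
  thus ?thesis unfolding hamming_adj_def by simp
qed

lemma tr_in: "v \<in> hamming_vertices (Suc n) q \<Longrightarrow> tr n v \<in> hamming_vertices n q"
  unfolding hamming_vertices_def tr_def by auto

lemma tr_id: "w \<in> hamming_vertices n q \<Longrightarrow> tr n w = w"
  unfolding hamming_vertices_def tr_def fun_eq_iff by (simp add: not_less)

lemma in_Suc: "q > 0 \<Longrightarrow> w \<in> hamming_vertices n q \<Longrightarrow> w \<in> hamming_vertices (Suc n) q"
  unfolding hamming_vertices_def by (simp add: less_Suc_eq)

lemma tr_image: assumes "q > 0" shows "tr n ` hamming_vertices (Suc n) q = hamming_vertices n q"
proof
  show "tr n ` hamming_vertices (Suc n) q \<subseteq> hamming_vertices n q" using tr_in by blast
  show "hamming_vertices n q \<subseteq> tr n ` hamming_vertices (Suc n) q"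
  proof
    fix w assume "w \<in> hamming_vertices n q"
    thus "w \<in> tr n ` hamming_vertices (Suc n) q"
      using tr_id[of w] in_Suc[of q w] \<open>q > 0\<close> by (metis image_eqI)
  qed
qed

lemma tr_upd: "tr n (w(n := a)) = tr n w"
  unfolding tr_def fun_eq_iff by simp

lemma count_eq:
  assumes v: "v \<in> hamming_vertices (Suc n) q" and neq: "f (tr n v) \<noteq> k"
  shows "card {u \<in> hamming_vertices (Suc n) q. hamming_adj (Suc n) v u \<and> f (tr n u) = k}
       = card {w \<in> hamming_vertices n q. hamming_adj n (tr n v) w \<and> f w = k}"
proof -
  let ?S = "{w \<in> hamming_vertices n q. hamming_adj n (tr n v) w \<and> f w = k}"
  let ?S' = "{u \<in> hamming_vertices (Suc n) q. hamming_adj (Suc n) v u \<and> f (tr n u) = k}"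
  let ?g = "\<lambda>w. w(n := v n)"
  have vn: "v n < q" using v unfolding hamming_vertices_def by auto
  have eq: "?S' = ?g ` ?S"
  proof
    show "?S' \<subseteq> ?g ` ?S"
    proof
      fix u assume u: "u \<in> ?S'"
      hence uV: "u \<in> hamming_vertices (Suc n) q" and a: "hamming_adj (Suc n) v u"
        and fu: "f (tr n u) = k" by auto
      have "tr n u \<noteq> tr n v" using fu neq by auto
      then obtain i where "tr n u i \<noteq> tr n v i" by blast
      hence "i \<in> {i. i < n \<and> v i \<noteq> u i}" unfolding tr_def by (auto split: if_splits)
      hence ne: "{i. i < n \<and> v i \<noteq> u i} \<noteq> {}" by blast
      with a have un: "v n = u n" and c1: "card {i. i < n \<and> v i \<noteq> u i} = 1"
        by (auto simp: adj_Suc)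
      have ueq: "u = ?g (tr n u)"
      proof
        fix j show "u j = (?g (tr n u)) j"
          using uV un unfolding hamming_vertices_def tr_def
          by (cases "j < n"; cases "j = n"; simp)
      qed
      have "{i. i < n \<and> v i \<noteq> tr n u i} = {i. i < n \<and> v i \<noteq> u i}"
        unfolding tr_def by auto
      hence "hamming_adj n (tr n v) (tr n u)" using c1 adj_tr by simp
      hence "tr n u \<in> ?S" using tr_in[OF uV] fu by simp
      with ueq show "u \<in> ?g ` ?S" by blast
    qed
  next
    show "?g ` ?S \<subseteq> ?S'"
    proof
      fix u assume "u \<in> ?g ` ?S"
      then obtain w where w: "w \<in> ?S" and uw: "u = ?g w" by blast
      have wV: "w \<in> hamming_vertices n q" using w by auto
      have trw: "tr n u = w" using tr_id[OF wV] uw unfolding tr_def fun_eq_iff by (metis fun_upd_other less_irrefl)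
      have uV: "u \<in> hamming_vertices (Suc n) q" using wV vn uw
        unfolding hamming_vertices_def by (simp add: less_Suc_eq)
      have c: "card {i. i < n \<and> v i \<noteq> w i} = 1" using w adj_tr by auto
      have "{i. i < n \<and> v i \<noteq> u i} = {i. i < n \<and> v i \<noteq> w i}" using uw by auto
      hence "hamming_adj (Suc n) v u" using c uw by (simp add: adj_Suc)
      thus "u \<in> ?S'" using uV trw w by auto
    qed
  qed
  have "inj_on ?g ?S"
  proof (rule inj_onI)
    fix x y assume "x \<in> ?S" "y \<in> ?S" "?g x = ?g y"
    hence "tr n (?g x) = tr n (?g y)" by simp
    moreover have "tr n (?g x) = x" "tr n (?g y) = y"
      using tr_id[of x n q] tr_id[of y n q] \<open>x \<in> ?S\<close> \<open>y \<in> ?S\<close> tr_upd by auto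
    ultimately show "x = y" by simp
  qed
  thus ?thesis using eq by (simp add: card_image)
qed

lemma extend:
  assumes q: "q > 0" and "bc_coloring n q b c f"
  shows "bc_coloring (Suc n) q b c (\<lambda>v. f (tr n v))"
proof -
  have img: "f ` hamming_vertices n q = {1,2}"
   and B: "\<And>v. v\<in>hamming_vertices n q \<Longrightarrow> f v = 1 \<Longrightarrow>
        card {u \<in> hamming_vertices n q. hamming_adj n v u \<and> f u = 2} = b"
   and C: "\<And>v. v\<in>hamming_vertices n q \<Longrightarrow> f v = 2 \<Longrightarrow>
        card {u \<in> hamming_vertices n q. hamming_adj n v u \<and> f u = 1} = c"
    using assms(2) unfolding bc_coloring_def by blast+
  have "(\<lambda>v. f (tr n v)) ` hamming_vertices (Suc n) q = f ` (tr n ` hamming_vertices (Suc n) q)"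
    by (simp add: image_image)
  hence i: "(\<lambda>v. f (tr n v)) ` hamming_vertices (Suc n) q = {1,2}" using img tr_image[OF q] by simp
  have p1: "\<forall>v\<in>hamming_vertices (Suc n) q. f (tr n v) = 1 \<longrightarrow>
        card {u \<in> hamming_vertices (Suc n) q. hamming_adj (Suc n) v u \<and> f (tr n u) = 2} = b"
  proof (intro ballI impI)
    fix v assume v: "v \<in> hamming_vertices (Suc n) q" and f1: "f (tr n v) = 1"
    have "card {u \<in> hamming_vertices (Suc n) q. hamming_adj (Suc n) v u \<and> f (tr n u) = 2}
       = card {w \<in> hamming_vertices n q. hamming_adj n (tr n v) w \<and> f w = 2}"
      by (rule count_eq[OF v]) (use f1 in simp)
    also have "\<dots> = b" using B[OF tr_in[OF v] f1] .
    finally show "card {u \<in> hamming_vertices (Suc n) q. hamming_adj (Suc n) v u \<and> f (tr n u) = 2} = b" .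
  qed
  have p2: "\<forall>v\<in>hamming_vertices (Suc n) q. f (tr n v) = 2 \<longrightarrow>
        card {u \<in> hamming_vertices (Suc n) q. hamming_adj (Suc n) v u \<and> f (tr n u) = 1} = c"
  proof (intro ballI impI)
    fix v assume v: "v \<in> hamming_vertices (Suc n) q" and f1: "f (tr n v) = 2"
    have "card {u \<in> hamming_vertices (Suc n) q. hamming_adj (Suc n) v u \<and> f (tr n u) = 1}
       = card {w \<in> hamming_vertices n q. hamming_adj n (tr n v) w \<and> f w = 1}"
      by (rule count_eq[OF v]) (use f1 in simp)
    also have "\<dots> = c" using C[OF tr_in[OF v] f1] .
    finally show "card {u \<in> hamming_vertices (Suc n) q. hamming_adj (Suc n) v u \<and> f (tr n u) = 1} = c" .
  qed
  show ?thesis unfolding bc_coloring_def using i p1 p2 by blast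
qed

lemma mono_has: "q > 0 \<Longrightarrow> has_bc_coloring n q b c \<Longrightarrow> n \<le> m \<Longrightarrow> has_bc_coloring m q b c"
proof (induction m)
  case 0 thus ?case by simp
next
  case (Suc m)
  show ?case
  proof (cases "n = Suc m")
    case True thus ?thesis using Suc.prems(2) by simp
  next
    case False
    hence "n \<le> m" using Suc.prems(3) by linarith
    hence "has_bc_coloring m q b c" using Suc.IH Suc.prems(1,2) by blast
    then obtain f where "bc_coloring m q b c f" unfolding has_bc_coloring_def by blast
    from extend[OF Suc.prems(1) this] show ?thesis unfolding has_bc_coloring_def by blast
  qed
qed

theorem proposition10:
  fixes q b c :: nat
  assumes "q \<ge> 2" and "b > 0" and "c > 0"
  shows "(\<forall>n>0. \<not> has_bc_coloring n q b c) \<or>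
         (\<exists>n0. \<forall>n>0. has_bc_coloring n q b c \<longleftrightarrow> n \<ge> n0)"
proof (cases "\<exists>n>0. has_bc_coloring n q b c")
  case False thus ?thesis by blast
next
  case True
  define n0 where "n0 = (LEAST n. n > 0 \<and> has_bc_coloring n q b c)"
  have h0: "n0 > 0 \<and> has_bc_coloring n0 q b c"
    unfolding n0_def using True by (metis (mono_tags, lifting) LeastI)
  have "\<forall>n>0. has_bc_coloring n q b c \<longleftrightarrow> n \<ge> n0"
  proof (intro allI impI iffI)
    fix n assume "n > 0" "has_bc_coloring n q b c"
    thus "n \<ge> n0" unfolding n0_def by (metis (mono_tags, lifting) Least_le)
  next
    fix n assume "n \<ge> n0"
    thus "has_bc_coloring n q b c" using h0 mono_has[of q n0 b c n] assms(1) by linarith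
  qed
  thus ?thesis by blast
qed

end
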